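(* Let $H$ be a graph with $V(H)=[k]$ and let $p\in\mathbb{R}[x_1,\ldots,x_k]$ be a polynomial with $p(x)\ge0$ for all $x\in\mathbb{R}^k$. Then the labeled quantum graph $\varphi_H(p)$ is positive, i.e. $t(\varphi_H(p);G,\phi)\ge0$ for every graph $G$ and every map $\phi:[k]\to V(G)$.
   Context: All graphs are finite and simple. A partially labeled graph is a graph in which some vertices carry distinct positive-integer labels; $\mathcal{F}_L$ denotes the set (up to label-preserving isomorphism) of partially labeled graphs whose set of labels is exactly $L$. The product $H_1\cdot H_2$ is the disjoint union with equally labeled vertices identified (multiple edges merged), and $\mathbb{R}[\mathcal{F}_L]$ is the algebra of formal finite real linear combinations of elements of $\mathcal{F}_L$ with this product extended bilinearly. For $F\in\mathcal{F}_L$, a graph $G$ and $\phi:L\to V(G)$, $t(F;G,\phi)$ is the probability that the map sending each labeled vertex with label $\ell$ to $\phi(\ell)$ and each unlabeled vertex to an independent uniformly random vertex of $G$ is a homomorphism; this is extended linearly to $\mathbb{R}[\mathcal{F}_L]$. For a partially labeled graph $F$, ${\operatorname{ind}}(F):=\sum_{F'}(-1)^{|E(F')\setminus E(F)|}F'$, the sum over all partially labeled graphs $F'$ with the same vertex set and labels as $F$ and $E(F')\supseteq E(F)$. Given $H$ with $V(H)=[k]$, regard it as fully labeled (vertex $j$ has label $j$). For $j\in[k]$, $H_j\in\mathcal{F}_{[k]}$ is obtained from $H$ by adding an unlabeled vertex $v$ adjacent exactly to the neighbours of $j$, and $H_j'$ is obtained from $H_j$ by adding the edge $vj$. $\varphi_H:\mathbb{R}[x_1,\ldots,x_k]\to\mathbb{R}[\mathcal{F}_{[k]}]$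 is the unique unital algebra homomorphism (the unit of $\mathbb{R}[\mathcal{F}_{[k]}]$ being the edgeless graph with $k$ vertices labeled $1,\ldots,k$) with $\varphi_H(x_j)={\operatorname{ind}}(H_j)+{\operatorname{ind}}(H_j')$ for all $j\in[k]$. *)

theory Defs
  imports Complex_Main "HOL-Library.Poly_Mapping" "HOL-Library.FuncSet"
begin

text \<open>Vertices of a partially labeled graph with label set exactly [k] = {1..k}:
  the labeled vertex carrying label i is Lab i (i in {1..k}); the unlabeled vertices
  are Unl 0, ..., Unl (n-1).  A partially labeled graph is represented by the pair
  (n, set of edges), each edge a 2-element set of vertices.\<close>

datatype pvert = Lab nat | Unl nat

type_synonym plg = "nat \<times> pvert set set"

definition pverts :: "nat \<Rightarrow> nat \<Rightarrow> pvert set" where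
  "pverts k n = Lab ` {1..k} \<union> Unl ` {0..<n}"

definition all_edges :: "pvert set \<Rightarrow> pvert set set" where
  "all_edges W = {{a, b} | a b. a \<in> W \<and> b \<in> W \<and> a \<noteq> b}"

fun shift_v :: "nat \<Rightarrow> pvert \<Rightarrow> pvert" where
  "shift_v m (Lab i) = Lab i"
| "shift_v m (Unl i) = Unl (i + m)"

text \<open>Product: disjoint union, equally labeled vertices identified, multiple edges merged.\<close>
definition gprod :: "plg \<Rightarrow> plg \<Rightarrow> plg" where
  "gprod F1 F2 = (fst F1 + fst F2, snd F1 \<union> (\<lambda>e. shift_v (fst F1) ` e) ` snd F2)"

type_synonym qgraph = "plg \<Rightarrow> real"

definition qsupp :: "qgraph \<Rightarrow> plg set" where
  "qsupp q = {F. q F \<noteq> 0}"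

definition qunit :: qgraph where
  "qunit = (\<lambda>F. if F = (0, {}) then 1 else 0)"

definition qadd :: "qgraph \<Rightarrow> qgraph \<Rightarrow> qgraph" where
  "qadd q1 q2 = (\<lambda>F. q1 F + q2 F)"

definition qmult :: "qgraph \<Rightarrow> qgraph \<Rightarrow> qgraph" where
  "qmult q1 q2 = (\<lambda>F. \<Sum>P \<in> {(F1, F2). F1 \<in> qsupp q1 \<and> F2 \<in> qsupp q2 \<and> gprod F1 F2 = F}.
                        q1 (fst P) * q2 (snd P))"

primrec qpow :: "qgraph \<Rightarrow> nat \<Rightarrow> qgraph" where
  "qpow q 0 = qunit"
| "qpow q (Suc n) = qmult q (qpow q n)"

definition ind :: "nat \<Rightarrow> plg \<Rightarrow> qgraph" where
  "ind k F = (\<lambda>F'. if fst F' = fst F \<and> snd F \<subseteq> snd F' \<and> snd F' \<subseteq> all_edges (pverts k (fst F))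
                   then (-1) ^ card (snd F' - snd F) else 0)"

definition is_graph :: "'v set \<Rightarrow> ('v \<Rightarrow> 'v \<Rightarrow> bool) \<Rightarrow> bool" where
  "is_graph V E \<longleftrightarrow> finite V \<and> V \<noteq> {} \<and> (\<forall>u v. E u v \<longrightarrow> E v u) \<and> (\<forall>u. \<not> E u u)
     \<and> (\<forall>u v. E u v \<longrightarrow> u \<in> V \<and> v \<in> V)"

definition is_hom :: "('v \<Rightarrow> 'v \<Rightarrow> bool) \<Rightarrow> pvert set set \<Rightarrow> (pvert \<Rightarrow> 'v) \<Rightarrow> bool" where
  "is_hom E EF f \<longleftrightarrow> (\<forall>a b. {a, b} \<in> EF \<longrightarrow> E (f a) (f b))"

text \<open>t(F;G,phi): probability that the map sending Lab i to phi i and the unlabeled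
  vertices to independent uniform random vertices of G is a homomorphism.\<close>
definition tdens :: "'v set \<Rightarrow> ('v \<Rightarrow> 'v \<Rightarrow> bool) \<Rightarrow> (nat \<Rightarrow> 'v) \<Rightarrow> plg \<Rightarrow> real" where
  "tdens V E \<phi> F =
     real (card {\<psi> \<in> {0..<fst F} \<rightarrow>\<^sub>E V.
                 is_hom E (snd F) (\<lambda>x. case x of Lab i \<Rightarrow> \<phi> i | Unl j \<Rightarrow> \<psi> j)})
     / real (card V) ^ fst F"

definition tq :: "'v set \<Rightarrow> ('v \<Rightarrow> 'v \<Rightarrow> bool) \<Rightarrow> (nat \<Rightarrow> 'v) \<Rightarrow> qgraph \<Rightarrow> real" where
  "tq V E \<phi> q = (\<Sum>F \<in> qsupp q. q F * tdens V E \<phi> F)"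

text \<open>H is given by a symmetric irreflexive adjacency relation A on {1..k}.\<close>
definition HE :: "(nat \<Rightarrow> nat \<Rightarrow> bool) \<Rightarrow> pvert set set" where
  "HE A = {{Lab i, Lab j} | i j. A i j}"

definition Hj :: "(nat \<Rightarrow> nat \<Rightarrow> bool) \<Rightarrow> nat \<Rightarrow> plg" where
  "Hj A j = (1, HE A \<union> {{Unl 0, Lab i} | i. A j i})"

definition Hj' :: "(nat \<Rightarrow> nat \<Rightarrow> bool) \<Rightarrow> nat \<Rightarrow> plg" where
  "Hj' A j = (1, snd (Hj A j) \<union> {{Unl 0, Lab j}})"

definition Xq :: "nat \<Rightarrow> (nat \<Rightarrow> nat \<Rightarrow> bool) \<Rightarrow> nat \<Rightarrow> qgraph" where
  "Xq k A j = qadd (ind k (Hj A j)) (ind k (Hj' A j))"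

text \<open>Polynomials in R[x_1..x_k]: finitely supported maps from monomials (exponent
  vectors) to coefficients.\<close>
type_synonym mpoly = "(nat \<Rightarrow>\<^sub>0 nat) \<Rightarrow>\<^sub>0 real"

definition mono_eval :: "(nat \<Rightarrow>\<^sub>0 nat) \<Rightarrow> (nat \<Rightarrow> real) \<Rightarrow> real" where
  "mono_eval m x = (\<Prod>i \<in> Poly_Mapping.keys m. x i ^ Poly_Mapping.lookup m i)"

definition mpoly_eval :: "mpoly \<Rightarrow> (nat \<Rightarrow> real) \<Rightarrow> real" where
  "mpoly_eval p x = (\<Sum>m \<in> Poly_Mapping.keys p. Poly_Mapping.lookup p m * mono_eval m x)"

text \<open>Image of the monomial x^m = prod_j x_j^(m_j) under the unital algebra hom phi_H.\<close>
definition qmono :: "nat \<Rightarrow> (nat \<Rightarrow> nat \<Rightarrow> bool) \<Rightarrow> (nat \<Rightarrow>\<^sub>0 nat) \<Rightarrow> qgraph" where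
  "qmono k A m = foldr (\<lambda>j acc. qmult (qpow (Xq k A j) (Poly_Mapping.lookup m j)) acc) [1..<Suc k] qunit"

definition phiH :: "nat \<Rightarrow> (nat \<Rightarrow> nat \<Rightarrow> bool) \<Rightarrow> mpoly \<Rightarrow> qgraph" where
  "phiH k A p = (\<lambda>F. \<Sum>m \<in> Poly_Mapping.keys p. Poly_Mapping.lookup p m * qmono k A m F)"

end

theory Submission imports Defs begin

lemma is_hom_Un: "is_hom E (X \<union> Y) f \<longleftrightarrow> is_hom E X f \<and> is_hom E Y f"
  unfolding is_hom_def by blast

lemma is_hom_cong: "(\<And>e x. e \<in> EF \<Longrightarrow> x \<in> e \<Longrightarrow> f x = g x) \<Longrightarrow> is_hom E EF f = is_hom E EF g"
  unfolding is_hom_def by (metis insertI1 insert_commute)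

lemma is_hom_image:
  assumes "\<forall>e\<in>EF. \<exists>c d. e = {c, d}"
  shows "is_hom E ((\<lambda>e. h ` e) ` EF) f \<longleftrightarrow> is_hom E EF (f \<circ> h)"
proof
  assume a: "is_hom E ((\<lambda>e. h ` e) ` EF) f"
  show "is_hom E EF (f \<circ> h)" unfolding is_hom_def
  proof (intro allI impI)
    fix a b assume "{a, b} \<in> EF"
    then have "{h a, h b} \<in> (\<lambda>e. h ` e) ` EF" by (metis image_empty image_insert imageI)
    then show "E ((f \<circ> h) a) ((f \<circ> h) b)" using a unfolding is_hom_def by simp
  qed
next
  assume a: "is_hom E EF (f \<circ> h)"
  show "is_hom E ((\<lambda>e. h ` e) ` EF) f" unfolding is_hom_def
  proof (intro allI impI)
    fix a b assume "{a, b} \<in> (\<lambda>e. h ` e) ` EF"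
    then obtain e where e: "e \<in> EF" "{a,b} = h ` e" by auto
    then obtain c d where cd: "e = {c, d}" using assms by blast
    have 1: "E (f (h c)) (f (h d))" using a e(1) cd unfolding is_hom_def comp_def by blast
    have 2: "E (f (h d)) (f (h c))" using a e(1) cd unfolding is_hom_def comp_def by (metis insert_commute)
    have "{a,b} = {h c, h d}" using e cd by simp
    then have "(a = h c \<and> b = h d) \<or> (a = h d \<and> b = h c)" by (simp add: doubleton_eq_iff)
    then show "E (f a) (f b)" using 1 2 by blast
  qed
qed

definition fv :: "(nat \<Rightarrow> 'v) \<Rightarrow> (nat \<Rightarrow> 'v) \<Rightarrow> pvert \<Rightarrow> 'v" where
  "fv \<phi> \<psi> = (\<lambda>x. case x of Lab i \<Rightarrow> \<phi> i | Unl j \<Rightarrow> \<psi> j)"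

definition homs where
  "homs V E \<phi> n EF = {\<psi> \<in> {0..<n} \<rightarrow>\<^sub>E V. is_hom E EF (fv \<phi> \<psi>)}"

lemma tdens_homs: "tdens V E \<phi> F = real (card (homs V E \<phi> (fst F) (snd F))) / real (card V) ^ fst F"
  unfolding tdens_def homs_def fv_def by simp

lemma all_edges_2: "e \<in> all_edges W \<Longrightarrow> \<exists>c d. e = {c, d}"
  unfolding all_edges_def by auto

lemma homs_gprod:
  assumes E1: "E1 \<subseteq> all_edges (pverts k n1)" and E2: "E2 \<subseteq> all_edges (pverts k n2)"
  shows "card (homs V E \<phi> (n1 + n2) (E1 \<union> (\<lambda>e. shift_v n1 ` e) ` E2))
       = card (homs V E \<phi> n1 E1) * card (homs V E \<phi> n2 E2)"
proof -
  define g where "g = (\<lambda>\<psi>::nat\<Rightarrow>'a. (restrict \<psi> {0..<n1}, restrict (\<lambda>j. \<psi> (j + n1)) {0..<n2}))"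
  define g' where "g' = (\<lambda>(\<psi>1::nat\<Rightarrow>'a, \<psi>2::nat\<Rightarrow>'a). (\<lambda>j. if j < n1 then \<psi>1 j else if j < n1 + n2 then \<psi>2 (j - n1) else undefined))"
  have key: "is_hom E (E1 \<union> (\<lambda>e. shift_v n1 ` e) ` E2) (fv \<phi> \<psi>) \<longleftrightarrow>
     is_hom E E1 (fv \<phi> (restrict \<psi> {0..<n1})) \<and> is_hom E E2 (fv \<phi> (restrict (\<lambda>j. \<psi> (j + n1)) {0..<n2}))" for \<psi>
  proof -
    have a: "is_hom E E1 (fv \<phi> \<psi>) = is_hom E E1 (fv \<phi> (restrict \<psi> {0..<n1}))"
    proof (rule is_hom_cong)
      fix e x assume "e \<in> E1" "x \<in> e"
      then have "x \<in> pverts k n1" using E1 unfolding all_edges_def by auto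
      then show "fv \<phi> \<psi> x = fv \<phi> (restrict \<psi> {0..<n1}) x" unfolding pverts_def fv_def by auto
    qed
    have b: "is_hom E ((\<lambda>e. shift_v n1 ` e) ` E2) (fv \<phi> \<psi>) = is_hom E E2 (fv \<phi> \<psi> \<circ> shift_v n1)"
      by (rule is_hom_image) (use E2 all_edges_2 in blast)
    have c: "is_hom E E2 (fv \<phi> \<psi> \<circ> shift_v n1) = is_hom E E2 (fv \<phi> (restrict (\<lambda>j. \<psi> (j + n1)) {0..<n2}))"
    proof (rule is_hom_cong)
      fix e x assume "e \<in> E2" "x \<in> e"
      then have "x \<in> pverts k n2" using E2 unfolding all_edges_def by auto
      then show "(fv \<phi> \<psi> \<circ> shift_v n1) x = fv \<phi> (restrict (\<lambda>j. \<psi> (j + n1)) {0..<n2}) x"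
        unfolding pverts_def fv_def by auto
    qed
    show ?thesis using a b c is_hom_Un by (metis (no_types, lifting))
  qed
  have "bij_betw g (homs V E \<phi> (n1 + n2) (E1 \<union> (\<lambda>e. shift_v n1 ` e) ` E2)) (homs V E \<phi> n1 E1 \<times> homs V E \<phi> n2 E2)"
  proof (rule bij_betw_byWitness[where f'=g'])
    show "\<forall>a\<in>homs V E \<phi> (n1 + n2) (E1 \<union> (\<lambda>e. shift_v n1 ` e) ` E2). g' (g a) = a"
    proof
      fix a assume "a \<in> homs V E \<phi> (n1 + n2) (E1 \<union> (\<lambda>e. shift_v n1 ` e) ` E2)"
      then have "a \<in> {0..<n1+n2} \<rightarrow>\<^sub>E V" unfolding homs_def by auto
      show "g' (g a) = a"
      proof
        fix j
        show "g' (g a) j = a j"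
          using PiE_arb[OF \<open>a \<in> {0..<n1+n2} \<rightarrow>\<^sub>E V\<close>, of j] unfolding g_def g'_def by simp
      qed
    qed
    show "\<forall>a'\<in>homs V E \<phi> n1 E1 \<times> homs V E \<phi> n2 E2. g (g' a') = a'"
    proof
      fix a' assume "a' \<in> homs V E \<phi> n1 E1 \<times> homs V E \<phi> n2 E2"
      then obtain p1 p2 where a': "a' = (p1, p2)" "p1 \<in> {0..<n1} \<rightarrow>\<^sub>E V" "p2 \<in> {0..<n2} \<rightarrow>\<^sub>E V"
        unfolding homs_def by auto
      have 1: "restrict (g' (p1, p2)) {0..<n1} = p1"
      proof
        fix j show "restrict (g' (p1, p2)) {0..<n1} j = p1 j"
          using PiE_arb[OF a'(2), of j] unfolding g'_def by simp
      qed
      have 2: "restrict (\<lambda>j. g' (p1, p2) (j + n1)) {0..<n2} = p2"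
      proof
        fix j show "restrict (\<lambda>j. g' (p1, p2) (j + n1)) {0..<n2} j = p2 j"
          using PiE_arb[OF a'(3), of j] unfolding g'_def by simp
      qed
      show "g (g' a') = a'" unfolding g_def a'(1) using 1 2 by simp
    qed
    show "g ` homs V E \<phi> (n1 + n2) (E1 \<union> (\<lambda>e. shift_v n1 ` e) ` E2) \<subseteq> homs V E \<phi> n1 E1 \<times> homs V E \<phi> n2 E2"
      using key unfolding homs_def g_def by (auto simp: PiE_iff)
    show "g' ` (homs V E \<phi> n1 E1 \<times> homs V E \<phi> n2 E2) \<subseteq> homs V E \<phi> (n1 + n2) (E1 \<union> (\<lambda>e. shift_v n1 ` e) ` E2)"
    proof
      fix x assume "x \<in> g' ` (homs V E \<phi> n1 E1 \<times> homs V E \<phi> n2 E2)"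
      then obtain p1 p2 where x: "x = g' (p1, p2)" "p1 \<in> homs V E \<phi> n1 E1" "p2 \<in> homs V E \<phi> n2 E2" by auto
      have p1: "p1 \<in> {0..<n1} \<rightarrow>\<^sub>E V" and p2: "p2 \<in> {0..<n2} \<rightarrow>\<^sub>E V" using x unfolding homs_def by auto
      have r1: "restrict x {0..<n1} = p1"
      proof
        fix j show "restrict x {0..<n1} j = p1 j"
          using PiE_arb[OF p1, of j] unfolding x(1) g'_def by simp
      qed
      have r2: "restrict (\<lambda>j. x (j + n1)) {0..<n2} = p2"
      proof
        fix j show "restrict (\<lambda>j. x (j + n1)) {0..<n2} j = p2 j"
          using PiE_arb[OF p2, of j] unfolding x(1) g'_def by simp
      qed
      have "x \<in> {0..<n1+n2} \<rightarrow>\<^sub>E V" using p1 p2 unfolding x(1) g'_def by (auto simp: PiE_iff extensional_def)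
      then show "x \<in> homs V E \<phi> (n1 + n2) (E1 \<union> (\<lambda>e. shift_v n1 ` e) ` E2)"
        using key[of x] r1 r2 x unfolding homs_def by auto
    qed
  qed
  then show ?thesis by (simp add: bij_betw_same_card card_cartesian_product)
qed


definition wfq :: "nat \<Rightarrow> qgraph \<Rightarrow> bool" where
  "wfq k q \<longleftrightarrow> finite (qsupp q) \<and> (\<forall>F\<in>qsupp q. snd F \<subseteq> all_edges (pverts k (fst F)))"

lemma tdens_gprod:
  assumes "snd F1 \<subseteq> all_edges (pverts k (fst F1))" "snd F2 \<subseteq> all_edges (pverts k (fst F2))"
  shows "tdens V E \<phi> (gprod F1 F2) = tdens V E \<phi> F1 * tdens V E \<phi> F2"
  using homs_gprod[OF assms, of V E \<phi>] unfolding tdens_homs gprod_def by (simp add: power_add)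

lemma shift_in: "a \<in> pverts k n2 \<Longrightarrow> shift_v n1 a \<in> pverts k (n1 + n2)"
  unfolding pverts_def by (cases a) auto

lemma shift_inj: "shift_v n1 a = shift_v n1 b \<Longrightarrow> a = b"
  by (cases a; cases b) auto

lemma gprod_wf:
  assumes "snd F1 \<subseteq> all_edges (pverts k (fst F1))" "snd F2 \<subseteq> all_edges (pverts k (fst F2))"
  shows "snd (gprod F1 F2) \<subseteq> all_edges (pverts k (fst (gprod F1 F2)))"
proof
  fix e assume "e \<in> snd (gprod F1 F2)"
  then consider "e \<in> snd F1" | e' where "e' \<in> snd F2" "e = shift_v (fst F1) ` e'"
    unfolding gprod_def by auto
  then show "e \<in> all_edges (pverts k (fst (gprod F1 F2)))"
  proof cases
    case 1
    then obtain a b where "e = {a,b}" "a \<in> pverts k (fst F1)" "b \<in> pverts k (fst F1)" "a \<noteq> b"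
      using assms(1) unfolding all_edges_def by auto
    moreover have "pverts k (fst F1) \<subseteq> pverts k (fst (gprod F1 F2))"
      unfolding pverts_def gprod_def by auto
    ultimately show ?thesis unfolding all_edges_def by blast
  next
    case 2
    then obtain a b where ab: "e' = {a,b}" "a \<in> pverts k (fst F2)" "b \<in> pverts k (fst F2)" "a \<noteq> b"
      using assms(2) unfolding all_edges_def by auto
    have "shift_v (fst F1) a \<noteq> shift_v (fst F1) b" using ab(4) shift_inj by blast
    moreover have "e = {shift_v (fst F1) a, shift_v (fst F1) b}" using 2(2) ab(1) by simp
    moreover have "shift_v (fst F1) a \<in> pverts k (fst (gprod F1 F2))" "shift_v (fst F1) b \<in> pverts k (fst (gprod F1 F2))"
      using ab shift_in[of a k "fst F2" "fst F1"] shift_in[of b k "fst F2" "fst F1"] unfolding gprod_def by auto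
    ultimately show ?thesis unfolding all_edges_def by blast
  qed
qed

lemma tq_superset:
  assumes "finite S" "qsupp q \<subseteq> S"
  shows "tq V E \<phi> q = (\<Sum>F\<in>S. q F * tdens V E \<phi> F)"
  unfolding tq_def by (rule sum.mono_neutral_left) (use assms in \<open>auto simp: qsupp_def\<close>)

lemma qmult_supp: "qsupp (qmult q1 q2) \<subseteq> (\<lambda>P. gprod (fst P) (snd P)) ` (qsupp q1 \<times> qsupp q2)"
proof
  fix F assume a: "F \<in> qsupp (qmult q1 q2)"
  show "F \<in> (\<lambda>P. gprod (fst P) (snd P)) ` (qsupp q1 \<times> qsupp q2)"
  proof (rule ccontr)
    assume "F \<notin> (\<lambda>P. gprod (fst P) (snd P)) ` (qsupp q1 \<times> qsupp q2)"
    then have "{(F1, F2). F1 \<in> qsupp q1 \<and> F2 \<in> qsupp q2 \<and> gprod F1 F2 = F} = {}" by force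
    then have "qmult q1 q2 F = 0" unfolding qmult_def by (simp only: sum.empty)
    with a show False unfolding qsupp_def by simp
  qed
qed

lemma wfq_qmult: "wfq k q1 \<Longrightarrow> wfq k q2 \<Longrightarrow> wfq k (qmult q1 q2)"
  unfolding wfq_def
proof (intro conjI)
  assume a: "finite (qsupp q1) \<and> (\<forall>F\<in>qsupp q1. snd F \<subseteq> all_edges (pverts k (fst F)))"
    "finite (qsupp q2) \<and> (\<forall>F\<in>qsupp q2. snd F \<subseteq> all_edges (pverts k (fst F)))"
  show "finite (qsupp (qmult q1 q2))"
    using qmult_supp a by (meson finite_SigmaI finite_imageI finite_subset)
  show "\<forall>F\<in>qsupp (qmult q1 q2). snd F \<subseteq> all_edges (pverts k (fst F))"
  proof
    fix F assume "F \<in> qsupp (qmult q1 q2)"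
    then obtain P where P: "P \<in> qsupp q1 \<times> qsupp q2" "F = gprod (fst P) (snd P)" using qmult_supp by blast
    have "snd (fst P) \<subseteq> all_edges (pverts k (fst (fst P)))" "snd (snd P) \<subseteq> all_edges (pverts k (fst (snd P)))"
      using a P(1) by auto
    then show "snd F \<subseteq> all_edges (pverts k (fst F))" unfolding P(2) by (rule gprod_wf)
  qed
qed

lemma tq_qmult:
  assumes w1: "wfq k q1" and w2: "wfq k q2"
  shows "tq V E \<phi> (qmult q1 q2) = tq V E \<phi> q1 * tq V E \<phi> q2"
proof -
  define P where "P = qsupp q1 \<times> qsupp q2"
  define g where "g = (\<lambda>P. gprod (fst P) (snd P))"
  have fP: "finite P" using w1 w2 unfolding P_def wfq_def by auto
  have qm: "qmult q1 q2 F = (\<Sum>x\<in>{x\<in>P. g x = F}. q1 (fst x) * q2 (snd x))" for F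
  proof -
    have "{(F1, F2). F1 \<in> qsupp q1 \<and> F2 \<in> qsupp q2 \<and> gprod F1 F2 = F} = {x\<in>P. g x = F}"
      unfolding P_def g_def by auto
    then show ?thesis unfolding qmult_def by simp
  qed
  have "tq V E \<phi> (qmult q1 q2) = (\<Sum>F\<in>g ` P. qmult q1 q2 F * tdens V E \<phi> F)"
    by (rule tq_superset) (use fP qmult_supp in \<open>auto simp: P_def g_def\<close>)
  also have "\<dots> = (\<Sum>F\<in>g ` P. \<Sum>x\<in>{x\<in>P. g x = F}. q1 (fst x) * q2 (snd x) * tdens V E \<phi> (g x))"
    unfolding qm sum_distrib_right by (rule sum.cong) auto
  also have "\<dots> = (\<Sum>x\<in>P. q1 (fst x) * q2 (snd x) * tdens V E \<phi> (g x))"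
    by (rule sum.image_gen[symmetric]) (rule fP)
  also have "\<dots> = (\<Sum>x\<in>P. (q1 (fst x) * tdens V E \<phi> (fst x)) * (q2 (snd x) * tdens V E \<phi> (snd x)))"
  proof (rule sum.cong)
    fix x assume "x \<in> P"
    then have "snd (fst x) \<subseteq> all_edges (pverts k (fst (fst x)))" "snd (snd x) \<subseteq> all_edges (pverts k (fst (snd x)))"
      using w1 w2 unfolding P_def wfq_def by auto
    then show "q1 (fst x) * q2 (snd x) * tdens V E \<phi> (g x) = (q1 (fst x) * tdens V E \<phi> (fst x)) * (q2 (snd x) * tdens V E \<phi> (snd x))"
      unfolding g_def using tdens_gprod[of "fst x" k "snd x" V E \<phi>] by (simp add: mult_ac)
  qed simp
  also have "\<dots> = tq V E \<phi> q1 * tq V E \<phi> q2"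
    unfolding tq_def sum_product P_def sum.cartesian_product by (simp add: case_prod_beta)
  finally show ?thesis .
qed

lemma qsupp_qunit: "qsupp qunit = {(0, {})}"
  unfolding qsupp_def qunit_def by auto

lemma wfq_qunit: "wfq k qunit"
  unfolding wfq_def qsupp_qunit by auto

lemma tq_qunit: "tq V E \<phi> qunit = 1"
proof -
  have "homs V E \<phi> 0 {} = {\<lambda>_. undefined}"
    unfolding homs_def is_hom_def by auto
  then show ?thesis unfolding tq_def qsupp_qunit tdens_homs by (simp add: qunit_def)
qed

lemma wfq_qadd: "wfq k q1 \<Longrightarrow> wfq k q2 \<Longrightarrow> wfq k (qadd q1 q2)"
proof -
  assume a: "wfq k q1" "wfq k q2"
  have s: "qsupp (qadd q1 q2) \<subseteq> qsupp q1 \<union> qsupp q2" unfolding qsupp_def qadd_def by auto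
  show ?thesis using a s unfolding wfq_def by (meson UnE finite_Un finite_subset subsetD)
qed

lemma finite_all_edges: "finite W \<Longrightarrow> finite (all_edges W)"
proof -
  assume "finite W"
  moreover have "all_edges W \<subseteq> (\<lambda>(a,b). {a,b}) ` (W \<times> W)" unfolding all_edges_def by auto
  ultimately show ?thesis by (meson finite_SigmaI finite_imageI finite_subset)
qed

lemma wfq_ind: "wfq k (ind k F)"
proof -
  have s: "qsupp (ind k F) \<subseteq> {fst F} \<times> Pow (all_edges (pverts k (fst F)))"
    unfolding qsupp_def ind_def by (auto split: if_splits)
  have "finite (pverts k (fst F))" unfolding pverts_def by auto
  then have "finite ({fst F} \<times> Pow (all_edges (pverts k (fst F))))" using finite_all_edges by auto
  then show ?thesis unfolding wfq_def using s finite_subset by fastforce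
qed

lemma wfq_Xq: "wfq k (Xq k A j)"
  unfolding Xq_def by (intro wfq_qadd wfq_ind)

lemma qpow_props: "wfq k q \<Longrightarrow> wfq k (qpow q n) \<and> tq V E \<phi> (qpow q n) = tq V E \<phi> q ^ n"
  by (induction n) (auto simp: wfq_qunit tq_qunit wfq_qmult tq_qmult)

lemma foldr_props:
  "wfq k (foldr (\<lambda>j acc. qmult (qpow (Xq k A j) (Poly_Mapping.lookup m j)) acc) xs qunit) \<and>
   tq V E \<phi> (foldr (\<lambda>j acc. qmult (qpow (Xq k A j) (Poly_Mapping.lookup m j)) acc) xs qunit)
     = prod_list (map (\<lambda>j. tq V E \<phi> (Xq k A j) ^ Poly_Mapping.lookup m j) xs)"
proof (induction xs)
  case Nil then show ?case by (simp add: wfq_qunit tq_qunit)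
next
  case (Cons a xs)
  have w: "wfq k (qpow (Xq k A a) (Poly_Mapping.lookup m a))"
    and t: "tq V E \<phi> (qpow (Xq k A a) (Poly_Mapping.lookup m a)) = tq V E \<phi> (Xq k A a) ^ Poly_Mapping.lookup m a"
    using qpow_props[OF wfq_Xq] by blast+
  show ?case using Cons w t by (simp add: wfq_qmult tq_qmult)
qed

lemma tq_qmono:
  assumes "Poly_Mapping.keys m \<subseteq> {1..k}"
  shows "wfq k (qmono k A m) \<and> tq V E \<phi> (qmono k A m) = mono_eval m (\<lambda>j. tq V E \<phi> (Xq k A j))"
proof -
  define y where "y = (\<lambda>j. tq V E \<phi> (Xq k A j))"
  have "prod_list (map (\<lambda>j. y j ^ Poly_Mapping.lookup m j) [1..<Suc k]) = (\<Prod>j\<in>{1..k}. y j ^ Poly_Mapping.lookup m j)"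
  proof -
    have "set [1..<Suc k] = {1..k}" by auto
    then show ?thesis using prod.distinct_set_conv_list[of "[1..<Suc k]" "\<lambda>j. y j ^ Poly_Mapping.lookup m j"] by simp
  qed
  also have "\<dots> = mono_eval m y"
    unfolding mono_eval_def
    by (rule prod.mono_neutral_right) (use assms in \<open>auto simp: in_keys_iff\<close>)
  finally show ?thesis using foldr_props[of k A m "[1..<Suc k]" V E \<phi>] unfolding qmono_def y_def by simp
qed

theorem lemma3p2:
  fixes k :: nat and A :: "nat \<Rightarrow> nat \<Rightarrow> bool" and p :: mpoly
    and V :: "'v set" and E :: "'v \<Rightarrow> 'v \<Rightarrow> bool" and \<phi> :: "nat \<Rightarrow> 'v"
  assumes H_sym: "\<forall>i j. A i j \<longrightarrow> A j i"
    and H_irrefl: "\<forall>i. \<not> A i i"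
    and H_verts: "\<forall>i j. A i j \<longrightarrow> i \<in> {1..k} \<and> j \<in> {1..k}"
    and p_vars: "\<forall>m \<in> Poly_Mapping.keys p. Poly_Mapping.keys m \<subseteq> {1..k}"
    and p_nonneg: "\<forall>x. mpoly_eval p x \<ge> 0"
    and G: "is_graph V E"
    and phi: "\<phi> ` {1..k} \<subseteq> V"
  shows "tq V E \<phi> (phiH k A p) \<ge> 0"
proof -
  define y where "y = (\<lambda>j. tq V E \<phi> (Xq k A j))"
  define K where "K = Poly_Mapping.keys p"
  define S where "S = (\<Union>m\<in>K. qsupp (qmono k A m))"
  have fK: "finite K" unfolding K_def by simp
  have qm: "\<And>m. m \<in> K \<Longrightarrow> wfq k (qmono k A m) \<and> tq V E \<phi> (qmono k A m) = mono_eval m y"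
    using tq_qmono p_vars unfolding K_def y_def by blast
  have fS: "finite S" unfolding S_def using fK qm unfolding wfq_def by blast
  have sub: "qsupp (phiH k A p) \<subseteq> S"
  proof
    fix F assume "F \<in> qsupp (phiH k A p)"
    then have "(\<Sum>m\<in>K. Poly_Mapping.lookup p m * qmono k A m F) \<noteq> 0"
      unfolding qsupp_def phiH_def K_def by simp
    then obtain m where "m \<in> K" "qmono k A m F \<noteq> 0" by (metis (no_types, lifting) mult_zero_right sum.neutral)
    then show "F \<in> S" unfolding S_def qsupp_def by auto
  qed
  have "tq V E \<phi> (phiH k A p) = (\<Sum>F\<in>S. phiH k A p F * tdens V E \<phi> F)"
    by (rule tq_superset[OF fS sub])
  also have "\<dots> = (\<Sum>F\<in>S. \<Sum>m\<in>K. Poly_Mapping.lookup p m * (qmono k A m F * tdens V E \<phi> F))"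
    unfolding phiH_def K_def sum_distrib_right by (simp add: mult_ac)
  also have "\<dots> = (\<Sum>m\<in>K. Poly_Mapping.lookup p m * (\<Sum>F\<in>S. qmono k A m F * tdens V E \<phi> F))"
    by (subst sum.swap) (simp add: sum_distrib_left)
  also have "\<dots> = (\<Sum>m\<in>K. Poly_Mapping.lookup p m * mono_eval m y)"
  proof (rule sum.cong)
    fix m assume m: "m \<in> K"
    have "tq V E \<phi> (qmono k A m) = (\<Sum>F\<in>S. qmono k A m F * tdens V E \<phi> F)"
      by (rule tq_superset[OF fS]) (use m in \<open>auto simp: S_def\<close>)
    then show "Poly_Mapping.lookup p m * (\<Sum>F\<in>S. qmono k A m F * tdens V E \<phi> F) = Poly_Mapping.lookup p m * mono_eval m y"
      using qm[OF m] by simp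
  qed simp
  also have "\<dots> = mpoly_eval p y" unfolding mpoly_eval_def K_def by simp
  finally show ?thesis using p_nonneg by simp
qed

end
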